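(* Let $a>0$, $k_d>0$, $x_0\in\mathbb{R}$, $y_0\in\mathbb{R}\setminus\{0\}$, and $\rho>0$ with $\rho a>2|y_0|$. For $(\ell_1,\ell_2)\in\mathbb{Z}^2$ set $$s(\ell_1,\ell_2)=\frac{\ell_1a-x_0+i(\ell_2a-y_0)}{|\ell_1a-x_0+i(\ell_2a-y_0)|}\cdot\frac{\ell_1a-x_0-i(\ell_2a+y_0)}{|\ell_1a-x_0-i(\ell_2a+y_0)|},$$ $\epsilon^{(1)}_{\ell_1,\ell_2}=\frac{a}{2\pi}\operatorname{Arg}\frac{s(\ell_1+1,\ell_2)}{s(\ell_1,\ell_2)}$, $\epsilon^{(2)}_{\ell_1,\ell_2}=\frac{a}{2\pi}\operatorname{Arg}\frac{s(\ell_1,\ell_2+1)}{s(\ell_1,\ell_2)}$, and $\Delta^{d(i,\pm)}_{\ell_1,\ell_2}=\sqrt{(a\pm\epsilon^{(i)}_{\ell_1,\ell_2})^2+a^2}-\sqrt2a$ for $i=1,2$. For $N>\rho$ let $B'_{\rho,N}$ be the set of $(\ell_1,\ell_2)\in\mathbb{Z}^2$ with $\rho a<\sqrt{(\ell_1a-x_0)^2+(\ell_2a-y_0)^2}<Na$ and $\rho a<\sqrt{(\ell_1a-x_0)^2+(\ell_2a+y_0)^2}<Na$, and $$E_{\rho,N}(\mathcal{S})=\sum_{(\ell_1,\ell_2)\in B'_{\rho,N}}\tfrac12k_d\Big((\Delta^{d(1,+)}_{\ell_1,\ell_2})^2+(\Delta^{d(2,+)}_{\ell_1,\ell_2})^2+(\Delta^{d(1,-)}_{\ell_1,\ell_2})^2+(\Delta^{d(2,-)}_{\ell_1,\ell_2})^2\Big).$$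 Then $E_{\rho,N}(\mathcal{S})$ converges to a finite limit as $N\to\infty$.
   Context: $\operatorname{Arg}$ is the principal argument in $(-\pi,\pi]$. This is the discrete (simple cubic lattice, spacing $a$, spring model with diagonal spring constant $k_d$) elastic energy of two parallel screw dislocations of opposite signs, $\mathcal{S}_+=\{x_0+iy_0\}$ and $\mathcal{S}_-=\{x_0-iy_0\}$. *)

theory Defs
  imports "HOL-Analysis.Analysis"
begin

definition sfield :: "real \<Rightarrow> real \<Rightarrow> real \<Rightarrow> int \<Rightarrow> int \<Rightarrow> complex" where
  "sfield a x0 y0 l1 l2 =
     (let z1 = Complex (real_of_int l1 * a - x0) (real_of_int l2 * a - y0);
          z2 = Complex (real_of_int l1 * a - x0) (- (real_of_int l2 * a + y0))
      in (z1 / complex_of_real (cmod z1)) * (z2 / complex_of_real (cmod z2)))"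

definition eps1 :: "real \<Rightarrow> real \<Rightarrow> real \<Rightarrow> int \<Rightarrow> int \<Rightarrow> real" where
  "eps1 a x0 y0 l1 l2 = a / (2 * pi) * Arg (sfield a x0 y0 (l1 + 1) l2 / sfield a x0 y0 l1 l2)"

definition eps2 :: "real \<Rightarrow> real \<Rightarrow> real \<Rightarrow> int \<Rightarrow> int \<Rightarrow> real" where
  "eps2 a x0 y0 l1 l2 = a / (2 * pi) * Arg (sfield a x0 y0 l1 (l2 + 1) / sfield a x0 y0 l1 l2)"

definition Delta_d :: "real \<Rightarrow> real \<Rightarrow> real" where
  "Delta_d a e = sqrt ((a + e)^2 + a^2) - sqrt 2 * a"

definition Bprime :: "real \<Rightarrow> real \<Rightarrow> real \<Rightarrow> real \<Rightarrow> real \<Rightarrow> (int \<times> int) set" where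
  "Bprime a x0 y0 \<rho> N = {(l1, l2). 
      \<rho> * a < sqrt ((real_of_int l1 * a - x0)^2 + (real_of_int l2 * a - y0)^2) \<and>
      sqrt ((real_of_int l1 * a - x0)^2 + (real_of_int l2 * a - y0)^2) < N * a \<and>
      \<rho> * a < sqrt ((real_of_int l1 * a - x0)^2 + (real_of_int l2 * a + y0)^2) \<and>
      sqrt ((real_of_int l1 * a - x0)^2 + (real_of_int l2 * a + y0)^2) < N * a}"

definition Energy :: "real \<Rightarrow> real \<Rightarrow> real \<Rightarrow> real \<Rightarrow> real \<Rightarrow> real \<Rightarrow> real" where
  "Energy a kd x0 y0 \<rho> N = (\<Sum>(l1, l2)\<in>Bprime a x0 y0 \<rho> N.
      1/2 * kd * ((Delta_d a (eps1 a x0 y0 l1 l2))^2 + (Delta_d a (eps2 a x0 y0 l1 l2))^2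
                + (Delta_d a (- eps1 a x0 y0 l1 l2))^2 + (Delta_d a (- eps2 a x0 y0 l1 l2))^2))"

end

theory Submission
  imports Defs
begin

lemma arctan_abs_le: fixes y :: real shows "\<bar>arctan y\<bar> \<le> \<bar>y\<bar>"
proof (cases "y \<ge> 0")
  case True
  have "arctan y \<le> y" by (rule arctan_le_self[OF True])
  moreover have "0 \<le> arctan y" using True by simp
  ultimately show ?thesis using True by simp
next
  case False
  hence y: "0 \<le> - y" by simp
  have "arctan (-y) \<le> -y" by (rule arctan_le_self[OF y])
  moreover have "0 \<le> arctan (-y)" using y by simp
  ultimately show ?thesis using False by (simp add: arctan_minus)
qed

lemma Arg_sq_bound:
  fixes v :: complex assumes "cmod v = 1"
  shows "(Arg v)^2 \<le> 4 * pi^2 * (cmod (v - 1))^2"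
proof (cases "cmod (v - 1) \<ge> 1/2")
  case True
  have "\<bar>Arg v\<bar> \<le> pi" using mpi_less_Arg[of v] Arg_le_pi[of v] by linarith
  hence "(Arg v)^2 \<le> pi^2" using power_mono[of "\<bar>Arg v\<bar>" pi 2] by simp
  also have "pi^2 \<le> 4 * pi^2 * (cmod (v - 1))^2"
  proof -
    have "(1/2::real)^2 \<le> (cmod (v-1))^2" using True by (intro power_mono) auto
    hence "1/4 \<le> (cmod (v-1))^2" by (simp add: power2_eq_square)
    hence "4*pi^2*(1/4) \<le> 4*pi^2*(cmod (v-1))^2" by (intro mult_left_mono) auto
    thus ?thesis by simp
  qed
  finally show ?thesis .
next
  case False
  have r: "\<bar>Re v - 1\<bar> \<le> cmod (v - 1)" using abs_Re_le_cmod[of "v-1"] by simp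
  have i: "\<bar>Im v\<bar> \<le> cmod (v - 1)" using abs_Im_le_cmod[of "v-1"] by simp
  have re: "Re v \<ge> 1/2" using r False by linarith
  have A: "Arg v = arctan (Im v / Re v)" using re by (intro arg_conv_arctan) auto
  have "\<bar>arctan (Im v / Re v)\<bar> \<le> \<bar>Im v / Re v\<bar>"
    by (rule arctan_abs_le)
  also have "\<bar>Im v / Re v\<bar> \<le> 2 * cmod (v - 1)"
  proof -
    have "\<bar>Im v / Re v\<bar> = \<bar>Im v\<bar> / Re v" using re by (simp add: abs_divide)
    also have "\<dots> \<le> \<bar>Im v\<bar> / (1/2)" using re by (intro divide_left_mono) auto
    also have "\<dots> = 2 * \<bar>Im v\<bar>" by simp
    also have "\<dots> \<le> 2 * cmod (v - 1)" using i by simp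
    finally show ?thesis .
  qed
  finally have "\<bar>Arg v\<bar> \<le> 2 * cmod (v - 1)" using A by simp
  hence "(Arg v)^2 \<le> (2 * cmod (v - 1))^2" using power_mono[of "\<bar>Arg v\<bar>" "2 * cmod (v - 1)" 2] by simp
  also have "\<dots> \<le> 4 * pi^2 * (cmod (v - 1))^2"
  proof -
    have "1 \<le> pi" using pi_gt3 by linarith
    hence "1 \<le> pi^2" by (simp add: one_le_power)
    thus ?thesis by (simp add: power_mult_distrib mult_right_mono)
  qed
  finally show ?thesis .
qed

lemma eps_sq_bound:
  fixes s s' :: complex and a :: real
  assumes "cmod s = 1" "s' \<noteq> 0 \<Longrightarrow> cmod s' = 1"
  shows "(a / (2*pi) * Arg (s' / s))^2 \<le> a^2 * (cmod (s' - s))^2"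
proof (cases "s' = 0")
  case True thus ?thesis by (simp add: Arg_zero)
next
  case False
  have s0: "s \<noteq> 0" using assms by auto
  have v: "cmod (s'/s) = 1" using assms False by (simp add: norm_divide)
  have "cmod (s'/s - 1) = cmod (s' - s)"
  proof -
    have "s'/s - 1 = (s' - s)/s" using s0 by (simp add: field_simps)
    thus ?thesis using assms by (simp add: norm_divide)
  qed
  hence "(Arg (s'/s))^2 \<le> 4 * pi^2 * (cmod (s' - s))^2" using Arg_sq_bound[OF v] by simp
  hence "(a/(2*pi))^2 * (Arg (s'/s))^2 \<le> (a/(2*pi))^2 * (4 * pi^2 * (cmod (s' - s))^2)"
    by (intro mult_left_mono) auto
  thus ?thesis by (simp add: power_mult_distrib power_divide field_simps)
qed

lemma Delta_sq_bound:
  assumes "a > 0" shows "(Delta_d a e)^2 \<le> e^2"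
proof -
  have 1: "sqrt ((a + e)^2 + a^2) = cmod (Complex (a+e) a)" by (simp add: cmod_def)
  have 2: "sqrt 2 * a = cmod (Complex a a)" using assms
    by (simp add: cmod_def real_sqrt_mult power2_eq_square)
  have "\<bar>cmod (Complex (a+e) a) - cmod (Complex a a)\<bar> \<le> cmod (Complex (a+e) a - Complex a a)"
    by (rule norm_triangle_ineq3)
  also have "\<dots> = \<bar>e\<bar>" by (simp add: cmod_def)
  finally have "\<bar>Delta_d a e\<bar> \<le> \<bar>e\<bar>" unfolding Delta_d_def 1 2 .
  thus ?thesis using power_mono[of "\<bar>Delta_d a e\<bar>" "\<bar>e\<bar>" 2] by simp
qed

lemma sgn_diff:
  fixes z w :: complex assumes "w \<noteq> 0"
  shows "cmod (sgn z - sgn w) \<le> 2 * cmod (z - w) / cmod w"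
proof (cases "z = 0")
  case True thus ?thesis using assms by (simp add: norm_sgn)
next
  case False
  have "sgn z - sgn w = (z / cmod z - z / cmod w) + (z - w) / cmod w"
    by (simp add: sgn_eq diff_divide_distrib)
  hence "cmod (sgn z - sgn w) \<le> cmod (z / cmod z - z / cmod w) + cmod ((z - w) / cmod w)"
    using norm_triangle_ineq[of "z / cmod z - z / cmod w" "(z - w) / cmod w"] by simp
  also have "cmod (z / cmod z - z / cmod w) = \<bar>cmod w - cmod z\<bar> / cmod w"
  proof -
    have "z / cmod z - z / cmod w = of_real (inverse (cmod z) - inverse (cmod w)) * z"
      by (simp add: divide_inverse algebra_simps)
    hence "cmod (z / cmod z - z / cmod w) = \<bar>inverse (cmod z) - inverse (cmod w)\<bar> * cmod z"
      by (simp only: norm_mult norm_of_real)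
    also have "\<dots> = \<bar>cmod w - cmod z\<bar> / cmod w"
    proof -
      have "(inverse (cmod z) - inverse (cmod w)) * cmod z = (cmod w - cmod z) / cmod w"
        using False assms by (simp add: field_simps)
      hence "\<bar>(inverse (cmod z) - inverse (cmod w)) * cmod z\<bar> = \<bar>(cmod w - cmod z) / cmod w\<bar>" by simp
      thus ?thesis by (simp add: abs_mult abs_divide)
    qed
    finally have "cmod (z / cmod z - z / cmod w) = \<bar>cmod w - cmod z\<bar> / cmod w" .
    thus ?thesis using False by simp
  qed
  also have "cmod ((z - w) / cmod w) = cmod (z - w) / cmod w" by (simp add: norm_divide)
  also have "\<bar>cmod w - cmod z\<bar> \<le> cmod (z - w)" using norm_triangle_ineq3[of w z] by (simp add: norm_minus_commute)
  hence "\<bar>cmod w - cmod z\<bar> / cmod w \<le> cmod (z - w) / cmod w" by (simp add: divide_right_mono)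
  finally show ?thesis by simp
qed

lemma sfield_sgn:
  "sfield a x0 y0 l1 l2 = sgn ((Complex (real_of_int l1 * a - x0) (real_of_int l2 * a + y0) - Complex 0 (2*y0))
       / Complex (real_of_int l1 * a - x0) (real_of_int l2 * a + y0))"
proof -
  define w where "w = Complex (real_of_int l1 * a - x0) (real_of_int l2 * a + y0)"
  define z where "z = Complex (real_of_int l1 * a - x0) (real_of_int l2 * a - y0)"
  have zw: "z = w - Complex 0 (2*y0)" unfolding z_def w_def by (simp add: complex_eq_iff)
  have c: "Complex (real_of_int l1 * a - x0) (- (real_of_int l2 * a + y0)) = cnj w"
    unfolding w_def by (simp add: complex_eq_iff)
  have "z / cmod z * (cnj w / cmod w) = sgn (z / w)"
  proof (cases "z = 0 \<or> w = 0")
    case True thus ?thesis by auto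
  next
    case False
    have "cnj w / cmod w = cmod w / w" using False
      by (simp add: field_simps complex_norm_square[symmetric] power2_eq_square mult.commute complex_mult_cnj)
    thus ?thesis using False by (simp add: sgn_eq norm_divide field_simps)
  qed
  thus ?thesis unfolding sfield_def Let_def c zw[symmetric] w_def[symmetric] z_def[symmetric] by simp
qed


lemma key_sgn:
  fixes w d b :: complex and a B r :: real
  assumes a: "a > 0" and d: "cmod d = a" and b: "cmod b \<le> B" and B: "0 \<le> B" "B < r"
    and w: "r < cmod w" and wd: "w + d \<noteq> 0"
  shows "cmod (sgn (1 - b/(w+d)) - sgn (1 - b/w)) \<le> (4*B*a/(1 - B/r) + 8*a^2) / (cmod w)^2"
proof -
  define c where "c = 1 - B/r"
  have r0: "r > 0" using B by linarith
  have c0: "c > 0" using B r0 by (simp add: c_def field_simps)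
  have wpos: "cmod w > 0" using w r0 by linarith
  hence w0: "w \<noteq> 0" by auto
  have "cmod b / cmod w \<le> B / r"
    using b B w r0 wpos by (meson frac_le less_imp_le norm_ge_zero)
  moreover have "1 - cmod b / cmod w \<le> cmod (1 - b/w)"
    using norm_triangle_ineq2[of 1 "b/w"] by (simp add: norm_divide)
  ultimately have F: "c \<le> cmod (1 - b/w)" unfolding c_def by linarith
  have T1: "0 \<le> 4*B*a/c / (cmod w)^2" using B a c0 by simp
  show ?thesis
  proof (cases "cmod w < 2*a")
    case True
    have "cmod (sgn (1 - b/(w+d)) - sgn (1 - b/w)) \<le> cmod (sgn (1 - b/(w+d))) + cmod (sgn (1 - b/w))"
      by (rule norm_triangle_ineq4)
    also have "\<dots> \<le> 2" by (simp add: norm_sgn)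
    also have "2 \<le> 8*a^2 / (cmod w)^2"
    proof -
      have "(cmod w)^2 \<le> (2*a)^2" using True wpos by (intro power_mono) auto
      thus ?thesis using wpos by (simp add: field_simps power_mult_distrib)
    qed
    finally show ?thesis using T1 unfolding c_def by (simp add: add_divide_distrib)
  next
    case False
    have "cmod (w+d) \<ge> cmod w - a" using norm_diff_ineq[of w d] d by simp
    hence wd2: "cmod (w+d) \<ge> cmod w / 2" using False by linarith
    have eq: "(1 - b/(w+d)) - (1 - b/w) = b*d/(w*(w+d))" using w0 wd by (simp add: field_simps)
    have "cmod ((1 - b/(w+d)) - (1 - b/w)) = cmod b * a / (cmod w * cmod (w+d))"
      unfolding eq using d by (simp add: norm_mult norm_divide)
    also have "\<dots> \<le> B * a / (cmod w * (cmod w / 2))"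
      using b a wd2 wpos B(1) by (intro frac_le mult_right_mono mult_left_mono mult_pos_pos) auto
    also have "\<dots> = 2*B*a / (cmod w)^2" by (simp add: power2_eq_square)
    finally have D: "cmod ((1 - b/(w+d)) - (1 - b/w)) \<le> 2*B*a / (cmod w)^2" .
    have "1 - b/w \<noteq> 0" using F c0 by auto
    hence "cmod (sgn (1 - b/(w+d)) - sgn (1 - b/w)) \<le> 2 * cmod ((1 - b/(w+d)) - (1 - b/w)) / cmod (1 - b/w)"
      by (rule sgn_diff)
    also have "\<dots> \<le> 2 * (2*B*a / (cmod w)^2) / c"
      using D F c0 B(1) a by (intro frac_le) auto
    also have "\<dots> = 4*B*a/c / (cmod w)^2" by (simp add: mult.commute)
    also have "\<dots> \<le> (4*B*a/c + 8*a^2) / (cmod w)^2" using wpos a by (intro divide_right_mono) auto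
    finally show ?thesis unfolding c_def .
  qed
qed


lemma eps_gen_bound:
  fixes a x0 y0 \<rho> :: real and l1 l2 l1' l2' :: int and d :: complex
  defines "W \<equiv> Complex (real_of_int l1 * a - x0) (real_of_int l2 * a + y0)"
  assumes a: "a > 0" and rho: "\<rho> * a > 2 * \<bar>y0\<bar>" and Wr: "\<rho> * a < cmod W"
    and d: "cmod d = a"
    and shift: "Complex (real_of_int l1' * a - x0) (real_of_int l2' * a + y0) = W + d"
  shows "(a / (2*pi) * Arg (sfield a x0 y0 l1' l2' / sfield a x0 y0 l1 l2))^2
           \<le> a^2 * (((4*(2*\<bar>y0\<bar>)*a/(1 - (2*\<bar>y0\<bar>)/(\<rho>*a)) + 8*a^2) / (cmod W)^2))^2"
proof -
  define b where "b = Complex 0 (2*y0)"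
  have "cmod b = sqrt ((2*y0)^2)" unfolding b_def by (simp add: cmod_def)
  also have "\<dots> = \<bar>2*y0\<bar>" by (rule real_sqrt_abs)
  finally have nb: "cmod b = 2*\<bar>y0\<bar>" by simp
  have r0: "\<rho> * a > 0" using rho by linarith
  have W0: "W \<noteq> 0" using Wr r0 by auto
  have s: "sfield a x0 y0 l1 l2 = sgn (1 - b/W)"
    unfolding sfield_sgn W_def[symmetric] b_def[symmetric] using W0 by (simp add: diff_divide_distrib)
  have "cmod (b/W) < 1" using nb Wr rho W0 by (simp add: norm_divide)
  hence "1 - b/W \<noteq> 0" by auto
  hence s1: "cmod (sfield a x0 y0 l1 l2) = 1" unfolding s by (simp add: norm_sgn)
  define s' where "s' = sfield a x0 y0 l1' l2'"
  have s'e: "s' = sgn ((W + d - b) / (W + d))"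
    unfolding s'_def sfield_sgn shift b_def by simp
  show ?thesis
  proof (cases "s' = 0")
    case True thus ?thesis unfolding s'_def[symmetric] by (simp add: Arg_zero)
  next
    case False
    hence Wd: "W + d \<noteq> 0" using s'e by auto
    have s'': "s' = sgn (1 - b/(W+d))" using s'e Wd by (simp add: diff_divide_distrib)
    have "(a / (2*pi) * Arg (s' / sfield a x0 y0 l1 l2))^2 \<le> a^2 * (cmod (s' - sfield a x0 y0 l1 l2))^2"
    proof (rule eps_sq_bound[OF s1])
      have "1 - b/(W+d) \<noteq> 0" using False s'' by auto
      thus "cmod s' = 1" unfolding s'' by (simp add: norm_sgn)
    qed
    also have "\<dots> \<le> a^2 * (((4*(2*\<bar>y0\<bar>)*a/(1 - (2*\<bar>y0\<bar>)/(\<rho>*a)) + 8*a^2) / (cmod W)^2))^2"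
    proof -
      have "cmod (s' - sfield a x0 y0 l1 l2) \<le> (4*(2*\<bar>y0\<bar>)*a/(1 - (2*\<bar>y0\<bar>)/(\<rho>*a)) + 8*a^2) / (cmod W)^2"
        unfolding s'' s by (rule key_sgn[OF a d]) (use nb rho Wr Wd in auto)
      thus ?thesis by (intro mult_left_mono power_mono) auto
    qed
    finally show ?thesis unfolding s'_def .
  qed
qed


lemma sq_half: fixes x y :: real shows "x^2/2 - y^2 \<le> (x - y)^2"
proof -
  have "0 \<le> (x - 2*y)^2 / 2" by simp
  thus ?thesis by (simp add: power2_eq_square field_simps) 
qed

lemma t_lower:
  fixes a R x0 y0 t :: real and l1 l2 :: int
  assumes a: "a > 0" and R: "R > 0" and t: "t = (real_of_int l1 * a - x0)^2 + (real_of_int l2 * a + y0)^2"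
    and tR: "t \<ge> R"
  shows "t \<ge> (min (a^2/2) R / (2 + (x0^2+y0^2)/R)) * (1 + (real_of_int l1)^2 + (real_of_int l2)^2)"
proof -
  define D where "D = x0^2+y0^2"
  define L where "L = (real_of_int l1)^2 + (real_of_int l2)^2"
  have D0: "D \<ge> 0" unfolding D_def by simp
  have L0: "L \<ge> 0" unfolding L_def by simp
  have "(real_of_int l1 * a - x0)^2 \<ge> (real_of_int l1 * a)^2/2 - x0^2" by (rule sq_half)
  moreover have "(real_of_int l2 * a + y0)^2 \<ge> (real_of_int l2 * a)^2/2 - y0^2"
    using sq_half[of "real_of_int l2 * a" "-y0"] by simp
  ultimately have t1: "t \<ge> a^2 * L / 2 - D" unfolding t L_def D_def by (simp add: power_mult_distrib field_simps)
  have "t * (D/R) \<ge> R * (D/R)" using tR D0 R by (intro mult_right_mono) auto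
  hence t2: "t * (D/R) \<ge> D" using R by simp
  have "t * (2 + D/R) \<ge> a^2 * L / 2 + R" using t1 t2 tR by (simp add: algebra_simps)
  moreover have "a^2 * L / 2 + R \<ge> min (a^2/2) R * (1 + L)"
  proof -
    have "min (a^2/2) R * L \<le> a^2/2 * L" using L0 by (intro mult_right_mono) auto
    moreover have "min (a^2/2) R \<le> R" by simp
    ultimately show ?thesis by (simp add: algebra_simps)
  qed
  ultimately have "t * (2 + D/R) \<ge> min (a^2/2) R * (1 + L)" by linarith
  moreover have "2 + D/R > 0" using D0 R by (simp add: add_pos_nonneg)
  ultimately have "t \<ge> min (a^2/2) R * (1 + L) / (2 + D/R)" by (simp add: divide_le_eq)
  thus ?thesis unfolding L_def D_def by (simp add: field_simps)
qed

lemma int_sum_bound: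
  fixes M :: nat
  shows "(\<Sum>l\<in>{-int M..int M}. 1/(1+(real_of_int l)^2)) \<le> 5 - 4/(real M + 1)"
proof (induction M)
  case 0 thus ?case by simp
next
  case (Suc M)
  have set: "{-int (Suc M)..int (Suc M)} = insert (-(int M + 1)) (insert (int M + 1) {-int M..int M})"
    by auto
  have "(\<Sum>l\<in>{-int (Suc M)..int (Suc M)}. 1/(1+(real_of_int l)^2))
        = 2/(1+(real M + 1)^2) + (\<Sum>l\<in>{-int M..int M}. 1/(1+(real_of_int l)^2))"
    unfolding set by (simp add: power2_eq_square algebra_simps)
  also have "\<dots> \<le> 2/(1+(real M + 1)^2) + (5 - 4/(real M + 1))" using Suc by simp
  also have "\<dots> \<le> 5 - 4/(real (Suc M) + 1)"
  proof -
    have "2/(1+(real M + 1)^2) \<le> 4/((real M + 1)*(real M + 2))"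
    proof -
      have p1: "0 < (real M + 1)*(real M + 2)" by simp
      have p2: "0 < 1+(real M + 1)^2" by (simp add: add_pos_nonneg)
      have "2 * ((real M + 1)*(real M + 2)) \<le> 4 * (1+(real M + 1)^2)"
        by (simp add: power2_eq_square algebra_simps)
      thus ?thesis using p1 p2 by (simp add: divide_simps)
    qed
    also have "\<dots> = 4/(real M + 1) - 4/(real M + 2)" by (simp add: field_simps)
    finally have "2/(1+(real M + 1)^2) \<le> 4/(real M + 1) - 4/(real M + 2)" .
    moreover have "4/(real (Suc M) + 1) = 4/(real M + 2)" by (simp add: algebra_simps)
    ultimately show ?thesis by linarith
  qed
  finally show ?case .
qed

lemma int_sum_bound_fin:
  fixes F :: "int set" assumes "finite F"
  shows "(\<Sum>l\<in>F. 1/(1+(real_of_int l)^2)) \<le> 5"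
proof -
  obtain M :: nat where M: "F \<subseteq> {-int M..int M}"
  proof -
    define k where "k = Max (insert 0 (abs ` F))"
    have "\<forall>x\<in>F. \<bar>x\<bar> \<le> k" unfolding k_def using assms by (intro ballI Max_ge) auto
    hence "F \<subseteq> {-int (nat k)..int (nat k)}" by fastforce
    thus ?thesis by (rule that)
  qed
  have "(\<Sum>l\<in>F. 1/(1+(real_of_int l)^2)) \<le> (\<Sum>l\<in>{-int M..int M}. 1/(1+(real_of_int l)^2))"
    by (rule sum_mono2[OF _ M]) auto
  also have "\<dots> \<le> 5 - 4/(real M + 1)" by (rule int_sum_bound)
  also have "\<dots> \<le> 5" by simp
  finally show ?thesis .
qed


lemma aux_prod: fixes x y :: real assumes "0 \<le> x" "0 \<le> y"
  shows "(1+x)*(1+y) \<le> (1+x+y)^2"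
proof -
  have "(1+x+y)^2 - (1+x)*(1+y) = x + y + x*x + x*y + y*y" by (simp add: power2_eq_square algebra_simps)
  also have "\<dots> \<ge> 0" using assms by simp
  finally show ?thesis by simp
qed

lemma summand_bound:
  fixes a kd x0 y0 \<rho> :: real and l1 l2 :: int
  assumes a: "a > 0" and kd: "kd > 0" and rho: "\<rho> * a > 2 * \<bar>y0\<bar>"
    and inR: "\<rho> * a < sqrt ((real_of_int l1 * a - x0)^2 + (real_of_int l2 * a + y0)^2)"
  defines "K \<equiv> 4*(2*\<bar>y0\<bar>)*a/(1 - (2*\<bar>y0\<bar>)/(\<rho>*a)) + 8*a^2"
    and "m \<equiv> min (a^2/2) ((\<rho>*a)^2) / (2 + (x0^2+y0^2)/((\<rho>*a)^2))"
  shows "1/2 * kd * ((Delta_d a (eps1 a x0 y0 l1 l2))^2 + (Delta_d a (eps2 a x0 y0 l1 l2))^2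
                + (Delta_d a (- eps1 a x0 y0 l1 l2))^2 + (Delta_d a (- eps2 a x0 y0 l1 l2))^2)
         \<le> (kd * 2 * a^2 * K^2 / m^2) * (1/(1+(real_of_int l1)^2)) * (1/(1+(real_of_int l2)^2))"
proof -
  define W where "W = Complex (real_of_int l1 * a - x0) (real_of_int l2 * a + y0)"
  define t where "t = (real_of_int l1 * a - x0)^2 + (real_of_int l2 * a + y0)^2"
  have cW: "cmod W = sqrt t" unfolding W_def t_def by (simp add: cmod_def)
  have Wr: "\<rho> * a < cmod W" using inR cW t_def by simp
  have r0: "\<rho> * a > 0" using rho by linarith
  have "sqrt t > 0" using Wr r0 cW by linarith
  hence t0: "t > 0" by simp
  have tW: "(cmod W)^2 = t" using cW t0 by simp
  have tR: "t \<ge> (\<rho>*a)^2"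
  proof -
    have "(\<rho>*a)^2 \<le> (cmod W)^2" using Wr r0 by (intro power_mono) auto
    thus ?thesis using tW by simp
  qed
  have tm: "t \<ge> m * (1 + (real_of_int l1)^2 + (real_of_int l2)^2)"
  proof -
    have "(\<rho>*a)^2 > 0" by (rule zero_less_power[OF r0])
    thus ?thesis unfolding m_def by (rule t_lower[OF a _ t_def tR])
  qed
  have m0: "m > 0" unfolding m_def using a r0 by (intro divide_pos_pos add_pos_nonneg) auto
  define e1 where "e1 = eps1 a x0 y0 l1 l2"
  define e2 where "e2 = eps2 a x0 y0 l1 l2"
  have E1: "e1^2 \<le> a^2 * (K / (cmod W)^2)^2"
    unfolding e1_def eps1_def K_def
    by (rule eps_gen_bound[where d = "Complex a 0", OF a rho Wr[unfolded W_def], folded W_def])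
       (use a in \<open>auto simp: W_def complex_eq_iff algebra_simps cmod_def\<close>)
  have E2: "e2^2 \<le> a^2 * (K / (cmod W)^2)^2"
    unfolding e2_def eps2_def K_def
    by (rule eps_gen_bound[where d = "Complex 0 a", OF a rho Wr[unfolded W_def], folded W_def])
       (use a in \<open>auto simp: W_def complex_eq_iff algebra_simps cmod_def\<close>)
  have "1/2 * kd * ((Delta_d a e1)^2 + (Delta_d a e2)^2 + (Delta_d a (- e1))^2 + (Delta_d a (- e2))^2)
        \<le> 1/2 * kd * (e1^2 + e2^2 + (-e1)^2 + (-e2)^2)"
    using Delta_sq_bound[OF a, of "-e1"] Delta_sq_bound[OF a, of "-e2"] Delta_sq_bound[OF a, of e1] Delta_sq_bound[OF a, of e2] kd
    by (intro mult_left_mono add_mono) auto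
  also have "\<dots> = kd * (e1^2 + e2^2)" by simp
  also have "\<dots> \<le> kd * (2 * (a^2 * (K / t)^2))" using E1 E2 kd tW by (intro mult_left_mono) auto
  also have "\<dots> = (kd * 2 * a^2 * K^2) / t^2" by (simp add: power_divide)
  also have "\<dots> \<le> (kd * 2 * a^2 * K^2) / (m^2 * ((1+(real_of_int l1)^2) * (1+(real_of_int l2)^2)))"
  proof (rule divide_left_mono)
    have "m^2 * ((1+(real_of_int l1)^2) * (1+(real_of_int l2)^2)) \<le> m^2 * (1 + (real_of_int l1)^2 + (real_of_int l2)^2)^2"
      by (intro mult_left_mono aux_prod) auto
    also have "\<dots> = (m * (1 + (real_of_int l1)^2 + (real_of_int l2)^2))^2" by (simp add: power_mult_distrib)
    also have "\<dots> \<le> t^2" using tm m0 by (intro power_mono) (auto intro!: mult_nonneg_nonneg add_nonneg_nonneg)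
    finally show "m^2 * ((1+(real_of_int l1)^2) * (1+(real_of_int l2)^2)) \<le> t^2" .
    show "0 \<le> kd * 2 * a^2 * K^2" using kd by simp
    show "0 < t^2 * (m^2 * ((1+(real_of_int l1)^2) * (1+(real_of_int l2)^2)))"
      using t0 m0 by (intro mult_pos_pos) (auto intro: add_pos_nonneg)
  qed
  also have "\<dots> = (kd * 2 * a^2 * K^2 / m^2) * (1/(1+(real_of_int l1)^2)) * (1/(1+(real_of_int l2)^2))"
    by simp
  finally show ?thesis unfolding e1_def e2_def .
qed


lemma Bprime_finite:
  assumes a: "a > 0"
  shows "finite (Bprime a x0 y0 \<rho> N)"
proof -
  define k where "k = \<lceil>N + (\<bar>x0\<bar> + \<bar>y0\<bar>)/a\<rceil>"
  have "Bprime a x0 y0 \<rho> N \<subseteq> {-k..k} \<times> {-k..k}"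
  proof safe
    fix l1 l2 assume "(l1, l2) \<in> Bprime a x0 y0 \<rho> N"
    hence h: "sqrt ((real_of_int l1 * a - x0)^2 + (real_of_int l2 * a - y0)^2) < N * a"
      unfolding Bprime_def by auto
    have h1: "\<bar>real_of_int l1 * a - x0\<bar> < N * a" using h real_sqrt_ge_abs1 by (meson le_less_trans)
    have h2: "\<bar>real_of_int l2 * a - y0\<bar> < N * a" using h real_sqrt_ge_abs2 by (meson le_less_trans)
    have b1: "\<bar>real_of_int l1\<bar> * a \<le> N * a + \<bar>x0\<bar> + \<bar>y0\<bar>" using h1 a by (simp add: abs_mult; linarith)
    have b2: "\<bar>real_of_int l2\<bar> * a \<le> N * a + \<bar>x0\<bar> + \<bar>y0\<bar>" using h2 a by (simp add: abs_mult; linarith)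
    have e: "N * a + \<bar>x0\<bar> + \<bar>y0\<bar> = (N + (\<bar>x0\<bar> + \<bar>y0\<bar>)/a) * a" using a by (simp add: field_simps)
    have c1: "\<bar>real_of_int l1\<bar> \<le> N + (\<bar>x0\<bar> + \<bar>y0\<bar>)/a"
      using b1 unfolding e by (rule mult_right_le_imp_le) (rule a)
    have c2: "\<bar>real_of_int l2\<bar> \<le> N + (\<bar>x0\<bar> + \<bar>y0\<bar>)/a"
      using b2 unfolding e by (rule mult_right_le_imp_le) (rule a)
    have k: "N + (\<bar>x0\<bar> + \<bar>y0\<bar>)/a \<le> real_of_int k" unfolding k_def by (rule le_of_int_ceiling)
    from c1 k have "\<bar>l1\<bar> \<le> k" by linarith
    thus "l1 \<in> {-k..k}" by auto
    from c2 k have "\<bar>l2\<bar> \<le> k" by linarith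
    thus "l2 \<in> {-k..k}" by auto
  qed
  thus ?thesis by (rule finite_subset) auto
qed

theorem lemmaA2:
  fixes a kd x0 y0 \<rho> :: real
  assumes "a > 0" and "kd > 0" and "y0 \<noteq> 0" and "\<rho> > 0" and "\<rho> * a > 2 * \<bar>y0\<bar>"
  shows "\<exists>L. ((\<lambda>N. Energy a kd x0 y0 \<rho> N) \<longlongrightarrow> L) at_top"
proof -
  note a = assms(1) and kd = assms(2) and rho = assms(5)
  define S where "S = (\<lambda>(l1::int, l2::int). 1/2 * kd * ((Delta_d a (eps1 a x0 y0 l1 l2))^2 + (Delta_d a (eps2 a x0 y0 l1 l2))^2
                + (Delta_d a (- eps1 a x0 y0 l1 l2))^2 + (Delta_d a (- eps2 a x0 y0 l1 l2))^2))"
  define K where "K = 4*(2*\<bar>y0\<bar>)*a/(1 - (2*\<bar>y0\<bar>)/(\<rho>*a)) + 8*a^2"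
  define m where "m = min (a^2/2) ((\<rho>*a)^2) / (2 + (x0^2+y0^2)/((\<rho>*a)^2))"
  define C where "C = kd * 2 * a^2 * K^2 / m^2"
  define g where "g = (\<lambda>l::int. 1/(1+(real_of_int l)^2))"
  define f where "f = (\<lambda>N. Energy a kd x0 y0 \<rho> N)"
  have fS: "f N = sum S (Bprime a x0 y0 \<rho> N)" for N unfolding f_def Energy_def S_def by simp
  have S0: "S l \<ge> 0" for l unfolding S_def using kd by (auto split: prod.splits)
  have C0: "C \<ge> 0" unfolding C_def using kd by simp
  have g0: "g l \<ge> 0" for l unfolding g_def by (simp add: add_pos_nonneg less_imp_le)
  have Sb: "S l \<le> C * g (fst l) * g (snd l)" if "l \<in> Bprime a x0 y0 \<rho> N" for l N
  proof -
    obtain l1 l2 where l: "l = (l1, l2)" by fastforce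
    have "\<rho> * a < sqrt ((real_of_int l1 * a - x0)^2 + (real_of_int l2 * a + y0)^2)"
      using that unfolding l Bprime_def by auto
    from summand_bound[OF a kd rho this] show ?thesis
      unfolding l S_def C_def K_def m_def g_def by simp
  qed
  have mono: "f N \<le> f N'" if "N \<le> N'" for N N'
  proof -
    have "Bprime a x0 y0 \<rho> N \<subseteq> Bprime a x0 y0 \<rho> N'"
      unfolding Bprime_def using that a by (auto intro: less_le_trans mult_right_mono)
    thus ?thesis unfolding fS using S0 Bprime_finite[OF a] by (intro sum_mono2) auto
  qed
  have bnd: "f N \<le> C * 25" for N
  proof -
    define B where "B = Bprime a x0 y0 \<rho> N"
    have fin: "finite B" unfolding B_def by (rule Bprime_finite[OF a])
    have "f N \<le> (\<Sum>l\<in>B. C * g (fst l) * g (snd l))" unfolding fS B_def[symmetric]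
      using Sb B_def by (intro sum_mono) auto
    also have "\<dots> \<le> (\<Sum>l\<in>fst ` B \<times> snd ` B. C * g (fst l) * g (snd l))"
    proof (rule sum_mono2)
      show "B \<subseteq> fst ` B \<times> snd ` B"
      proof
        fix l assume "l \<in> B" thus "l \<in> fst ` B \<times> snd ` B" by (simp add: mem_Times_iff)
      qed
    qed (use fin C0 g0 in auto)
    also have "\<dots> = (\<Sum>(x,y)\<in>fst ` B \<times> snd ` B. C * g x * g y)"
      by (simp add: case_prod_beta')
    also have "\<dots> = (\<Sum>x\<in>fst ` B. \<Sum>y\<in>snd ` B. C * g x * g y)"
      by (rule sum.cartesian_product[symmetric])
    also have "\<dots> = C * ((\<Sum>x\<in>fst ` B. g x) * (\<Sum>y\<in>snd ` B. g y))"
      unfolding sum_product by (simp add: sum_distrib_left mult.assoc)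
    also have "\<dots> \<le> C * (5 * 5)"
      using fin C0 g0 int_sum_bound_fin[of "fst ` B"] int_sum_bound_fin[of "snd ` B"]
      by (intro mult_left_mono mult_mono) (auto simp: g_def intro: sum_nonneg)
    finally show ?thesis by simp
  qed
  define L where "L = Sup (range f)"
  have bdd: "bdd_above (range f)" using bnd by (intro bdd_aboveI[of _ "C * 25"]) auto
  have "(f \<longlongrightarrow> L) at_top"
  proof (rule increasing_tendsto)
    show "\<forall>\<^sub>F n in at_top. f n \<le> L" unfolding L_def using bdd by (intro always_eventually allI cSup_upper) auto
    fix x assume "x < L"
    then obtain N0 where "x < f N0" unfolding L_def using less_cSup_iff[of "range f" x] bdd by auto
    show "\<forall>\<^sub>F n in at_top. x < f n"
    proof (rule eventually_mono[OF eventually_ge_at_top[of N0]])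
      fix n assume "N0 \<le> n"
      hence "f N0 \<le> f n" by (rule mono)
      thus "x < f n" using \<open>x < f N0\<close> by linarith
    qed
  qed
  thus ?thesis unfolding f_def by blast
qed

end
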